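(* Consider $n$ processes running the Median-based Byzantine Agreement algorithm (described in the context) with parameter $\alpha$, where $\alpha < \lceil n/6 \rceil - 1$, in a system with fewer than $\lfloor n/3 \rfloor$ Byzantine processes and fewer than $\alpha$ processes subject to malicious transient faults. Then (consistency) all non-faulty processes output the same value $d$, and (interval validity) $d \in \{\min T,\dots,\max T\}$, where $T$ is the multiset of inputs of the non-faulty processes.
   Context: System model: $n$ processes $p_1,\dots,p_n$ communicate over a complete network in fully synchronous rounds (every message sent in a round is delivered before the next round); the receiver of a message knows its sender. A Byzantine process may deviate arbitrarily from the protocol, e.g. send different messages to different processes or omit messages. A malicious transient fault at a non-Byzantine process replaces its value (input) by an arbitrary, possibly adversarially chosen value (possibly $\bot$) at the start of the execution; afterwards the process follows the algorithm (so it sends the same value to everyone). A process is non-faulty if it is neither Byzantine nor subject to a transient fault. Each process $p_i$ has an input value $v_i$ from a totally ordered domain $V$ (integers); $\bot\notin V$ is a special default value. WeakMVBA: a Byzantine agreement protocol (tolerating the given number of Byzantine processes) in which each process has an input and all non-faulty processes terminate with: (consistency) the same decision value; (weak validity) if all non-faulty processes have the same input $v$, the decision is $v$; otherwise the decision is some value of $V\cup\{\bot\}$. Median-based Byzantine Agreement algorithm with parameter $\alpha \ge 0$, run by a process with input $v$: (1) send $v$ to all processes (including itself); initialize an array $A[1..n]$ to $\bot$ and set $A[i]$ to the value received from $p_i$. (2) For each $i=1,\dots,n$, in parallel, run an instance of WeakMVBA in which this process uses input $A[i]$, and replace $A[i]$ by the decision of that instance. (3) Output select\_value$(A)$, defined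 as: delete all $\bot$ entries of $A$ to obtain a list $A_{\not\bot}$ of length $k$; let $C[u]$ be the number of occurrences of $u$ in $A_{\not\bot}$ and let $m$ be a value maximizing $C[m]$ (ties broken by a fixed deterministic rule); if $C[m] \ge \lfloor k/3\rfloor + 1 + \alpha$, output $m$; otherwise sort $A_{\not\bot}$ in nondecreasing order and output its median element (the entry at position $\lfloor k/2 \rfloor$; for even $k$ the lower of the two middle values). *)

theory Defs
  imports Complex_Main
begin

text \<open>Processes are indexed by 0..<n. The default value bottom is None; V = int.\<close>

definition not_bot :: "int option list \<Rightarrow> int list" where
  "not_bot A = [the x. x \<leftarrow> A, x \<noteq> None]"

definition mode_rule :: "(int option list \<Rightarrow> int) \<Rightarrow> bool" where
  "mode_rule tb \<longleftrightarrow> (\<forall>A. not_bot A \<noteq> [] \<longrightarrow>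
      tb A \<in> set (not_bot A) \<and>
      (\<forall>y. count_list (not_bot A) y \<le> count_list (not_bot A) (tb A)))"

text \<open>select_value with parameter alpha; the median is the lower middle element
  of the sorted list (0-based position (k-1) div 2).\<close>
definition select_value :: "(int option list \<Rightarrow> int) \<Rightarrow> nat \<Rightarrow> int option list \<Rightarrow> int" where
  "select_value tb \<alpha> A =
     (let xs = not_bot A; k = length xs; m = tb A in
      if count_list xs m \<ge> k div 3 + 1 + \<alpha> then m
      else sort xs ! ((k - 1) div 2))"

end

theory Submission
  imports Defs
begin

lemma not_bot_alt: "not_bot A = map the (filter (\<lambda>x. x \<noteq> None) A)"
  by (induct A) (auto simp: not_bot_def)

lemma count_list_filter: "count_list xs m = length (filter (\<lambda>x. x = m) xs)"
  by (induct xs) auto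

lemma count_bound:
  assumes "length A = n" "S \<subseteq> {0..<n}" "\<forall>j\<in>S. A!j = Some (f j)" "\<forall>j\<in>S. \<not> P (f j)"
  shows "length (filter P (not_bot A)) + card S \<le> length (not_bot A)"
    and "length (filter P (not_bot A)) + card S \<le> n"
proof -
  have e1: "length (filter P (not_bot A)) = card {j. j < length A \<and> A!j \<noteq> None \<and> P (the (A!j))}"
    unfolding not_bot_alt by (simp add: filter_map filter_filter length_filter_conv_card o_def)
  have e2: "length (not_bot A) = card {j. j < length A \<and> A!j \<noteq> None}"
    unfolding not_bot_alt by (simp add: length_filter_conv_card)
  let ?J = "{j. j < length A \<and> A!j \<noteq> None \<and> P (the (A!j))}"
  let ?N = "{j. j < length A \<and> A!j \<noteq> None}"
  have dj: "?J \<inter> S = {}" using assms by auto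
  have fin: "finite ?J" "finite S" using assms(2) finite_subset by auto
  have "card ?J + card S = card (?J \<union> S)" using card_Un_disjoint[OF fin dj] by simp
  also have "\<dots> \<le> card ?N" by (rule card_mono) (use assms in auto)
  finally have JN: "card ?J + card S \<le> card ?N" .
  then show "length (filter P (not_bot A)) + card S \<le> length (not_bot A)" using e1 e2 by simp
  have "card ?N \<le> card {0..<n}" by (rule card_mono) (use assms in auto)
  then show "length (filter P (not_bot A)) + card S \<le> n"
    using JN e1 by simp
qed

lemma sorted_low:
  fixes ys :: "int list"
  assumes "sorted ys" "p < length ys" "length (filter (\<lambda>x. x < a) ys) \<le> p"
  shows "a \<le> ys!p"
proof (rule ccontr)
  assume "\<not> a \<le> ys!p"
  then have "\<forall>q\<le>p. ys!q < a" using sorted_nth_mono[OF assms(1) _ assms(2)] by force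
  then have "{0..p} \<subseteq> {q. q < length ys \<and> ys!q < a}" using assms(2) by auto
  then have "card {0..p} \<le> card {q. q < length ys \<and> ys!q < a}" by (rule card_mono[rotated]) auto
  then show False using assms(3) by (simp add: length_filter_conv_card)
qed

lemma sorted_high:
  fixes ys :: "int list"
  assumes "sorted ys" "p < length ys" "length (filter (\<lambda>x. a < x) ys) < length ys - p"
  shows "ys!p \<le> a"
proof (rule ccontr)
  assume "\<not> ys!p \<le> a"
  then have "\<forall>q. p \<le> q \<and> q < length ys \<longrightarrow> a < ys!q" using sorted_nth_mono[OF assms(1)] by force
  then have "{p..<length ys} \<subseteq> {q. q < length ys \<and> a < ys!q}" by auto
  then have "card {p..<length ys} \<le> card {q. q < length ys \<and> a < ys!q}" by (rule card_mono[rotated]) auto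
  then show False using assms(3) by (simp add: length_filter_conv_card)
qed

lemma filter_sort_len: "length (filter P (sort xs)) = length (filter P xs)"
  using filter_sort[of P "\<lambda>x. x" xs] by simp

theorem theorem2:
  fixes n \<alpha> :: nat
    and Byz Trans :: "nat set"            \<comment> \<open>Byzantine / transiently faulty processes\<close>
    and v :: "nat \<Rightarrow> int"                \<comment> \<open>original inputs\<close>
    and w :: "nat \<Rightarrow> int option"         \<comment> \<open>corrupted values of transiently faulty processes\<close>
    and byz :: "nat \<Rightarrow> nat \<Rightarrow> int option" \<comment> \<open>byz i j: what Byzantine p_j sends to p_i in step 1\<close>
    and dec :: "nat \<Rightarrow> nat \<Rightarrow> int option" \<comment> \<open>dec i j: decision of p_i in WeakMVBA instance j\<close>
    and tb :: "int option list \<Rightarrow> int"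
  defines "NF \<equiv> {0..<n} - Byz - Trans"
    and "A0 \<equiv> \<lambda>i j. if j \<in> Byz then byz i j else if j \<in> Trans then w j else Some (v j)"
  assumes alpha: "int \<alpha> < \<lceil>real n / 6\<rceil> - 1"
    and byz_sub: "Byz \<subseteq> {0..<n}" and byz_card: "card Byz < n div 3"
    and trans_sub: "Trans \<subseteq> {0..<n}" and trans_card: "card Trans < \<alpha>"
    and disj: "Byz \<inter> Trans = {}"
    and tie: "mode_rule tb"
    and mvba_consistency: "\<forall>j<n. \<forall>i\<in>NF. \<forall>i'\<in>NF. dec i j = dec i' j"
    and mvba_validity: "\<forall>j<n. \<forall>x::int. (\<forall>i\<in>{0..<n} - Byz. A0 i j = Some x)
                          \<longrightarrow> (\<forall>i\<in>NF. dec i j = Some x)"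
  shows "\<exists>d. (\<forall>i\<in>NF. select_value tb \<alpha> (map (dec i) [0..<n]) = d)
            \<and> Min (v ` NF) \<le> d \<and> d \<le> Max (v ` NF)"
proof -
  have "int \<alpha> + 2 \<le> \<lceil>real n / 6\<rceil>" using alpha by linarith
  then have "real (\<alpha> + 1) < real n / 6" unfolding le_ceiling_iff by simp
  then have n6: "6 * \<alpha> + 7 \<le> n" by linarith
  define b where "b = card Byz"
  define t where "t = card Trans"
  have cNF: "card NF = n - b - t"
  proof -
    have "card ({0..<n} - Byz) = n - b" using byz_sub by (simp add: card_Diff_subset b_def finite_subset)
    moreover have "Trans \<subseteq> {0..<n} - Byz" using trans_sub disj by auto
    ultimately show ?thesis unfolding NF_def t_def
      by (simp add: card_Diff_subset finite_subset)
  qed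
  have b3: "3 * b + 3 \<le> n" using byz_card b_def by linarith
  have ta: "t + 1 \<le> \<alpha>" using trans_card t_def by simp
  have "card NF > 0" using cNF b3 ta n6 by linarith
  then have NFne: "NF \<noteq> {}" by auto
  then obtain i0 where i0: "i0 \<in> NF" by auto
  define A where "A = map (dec i0) [0..<n]"
  have same: "map (dec i) [0..<n] = A" if "i \<in> NF" for i
    unfolding A_def
  proof (intro map_cong refl)
    fix j assume "j \<in> set [0..<n]"
    then have "j < n" by simp
    then show "dec i j = dec i0 j" using mvba_consistency that i0 by blast
  qed
  have NFsub: "NF \<subseteq> {0..<n}" unfolding NF_def by auto
  have finNF: "finite NF" using NFsub finite_subset by auto
  have Aj: "\<forall>j\<in>NF. A!j = Some (v j)"
  proof
    fix j assume j: "j \<in> NF"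
    have "\<forall>i\<in>{0..<n} - Byz. A0 i j = Some (v j)" using j unfolding A0_def NF_def by auto
    then have "dec i0 j = Some (v j)" using mvba_validity j i0 NFsub by auto
    then show "A!j = Some (v j)" using j NFsub unfolding A_def by auto
  qed
  have lenA: "length A = n" unfolding A_def by simp
  define mn where "mn = Min (v ` NF)"
  define mx where "mx = Max (v ` NF)"
  have mnj: "\<forall>j\<in>NF. mn \<le> v j \<and> v j \<le> mx" unfolding mn_def mx_def using finNF by auto
  define xs where "xs = not_bot A"
  define k where "k = length xs"
  have kNF: "card NF \<le> k"
    using count_bound(1)[OF lenA NFsub Aj, of "\<lambda>_. False"] unfolding k_def xs_def by simp
  have "mn \<le> select_value tb \<alpha> A \<and> select_value tb \<alpha> A \<le> mx"
  proof (cases "count_list xs (tb A) \<ge> k div 3 + 1 + \<alpha>")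
    case True
    then have sv: "select_value tb \<alpha> A = tb A" unfolding select_value_def xs_def k_def Let_def by simp
    show ?thesis
    proof (rule ccontr)
      assume "\<not> ?thesis"
      then have "\<forall>j\<in>NF. \<not> (\<lambda>x. x = tb A) (v j)" using sv mnj by force
      from count_bound[OF lenA NFsub Aj this] have
        c1: "count_list xs (tb A) + card NF \<le> k" and c2: "count_list xs (tb A) + card NF \<le> n"
        unfolding count_list_filter xs_def k_def by auto
      have "3 * (k div 3) + 2 \<ge> k" by linarith
      then show False using c1 c2 True cNF b3 ta n6 by linarith
    qed
  next
    case False
    define p where "p = (k - 1) div 2"
    define ys where "ys = sort xs"
    have sv: "select_value tb \<alpha> A = ys ! p" using False
      unfolding select_value_def xs_def k_def Let_def ys_def p_def by simp
    have sy: "sorted ys" "length ys = k" unfolding ys_def k_def by auto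
    have pk: "p < k" unfolding p_def using kNF cNF b3 ta n6 by linarith
    have "\<forall>j\<in>NF. \<not> (\<lambda>x. x < mn) (v j)" using mnj by force
    from count_bound[OF lenA NFsub Aj this] have
      l1: "length (filter (\<lambda>x. x < mn) xs) + card NF \<le> k" and l2: "length (filter (\<lambda>x. x < mn) xs) + card NF \<le> n"
      unfolding xs_def k_def by auto
    have "\<forall>j\<in>NF. \<not> (\<lambda>x. mx < x) (v j)" using mnj by force
    from count_bound[OF lenA NFsub Aj this] have
      h1: "length (filter (\<lambda>x. mx < x) xs) + card NF \<le> k" and h2: "length (filter (\<lambda>x. mx < x) xs) + card NF \<le> n"
      unfolding xs_def k_def by auto
    have "mn \<le> ys ! p"
    proof (rule sorted_low[OF sy(1)])
      show "p < length ys" using sy pk by simp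
      show "length (filter (\<lambda>x. x < mn) ys) \<le> p"
        unfolding ys_def filter_sort_len p_def using l1 l2 cNF b3 ta n6 by linarith
    qed
    moreover have "ys ! p \<le> mx"
    proof (rule sorted_high[OF sy(1)])
      show "p < length ys" using sy pk by simp
      show "length (filter (\<lambda>x. mx < x) ys) < length ys - p"
        unfolding ys_def filter_sort_len p_def using sy h1 h2 cNF b3 ta n6 unfolding ys_def by linarith
    qed
    ultimately show ?thesis using sv by simp
  qed
  then show ?thesis unfolding mn_def mx_def using same by (intro exI[of _ "select_value tb \<alpha> A"]) simp
qed

end
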